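(* Let $T$ be a tree of diameter $d$ on $n$ vertices with maximum Wiener index. Let $x$ be a special vertex of $T$ and let $T_1,T_2$ be components of $T-x$ such that each of them contains exactly one broom vertex of $T$ and $d(y,y')<d$ for all leaves $y\in V(T_1)$, $y'\in V(T_2)$. Let $y_1\in V(T_1)$, $y_2\in V(T_2)$ be leaves of $T$, $y_1'$ the broom vertex adjacent to $y_1$, $p=d(x,y_1)=d(x,y_2)$, and $t_i$ the number of leaves of $T$ in $T_i$ ($i\in\{1,2\}$). Let $T'=T_2\xrightarrow{T} y_1'$. Then $W(T)\geq W(T')$ if and only if $$t_1-1\geq \frac{p(3n+5-12t_2-10p)}{12(p+t_2-1)}.$$
   Context: All graphs are finite and simple; $d(u,v)$ denotes distance and $W(G)=\sum_{\{u,v\}\subseteq V(G)} d(u,v)$ is the Wiener index. A tree $T$ of order $n$ and diameter $d$ has maximum Wiener index if $W(T')\leq W(T)$ for every tree $T'$ of order $n$ and diameter $d$. A leaf is a vertex of degree $1$; a broom vertex of $T$ is a vertex adjacent to a leaf of $T$. A vertex $x$ of a tree $T$ of diameter $d$ is special if $\deg(x)\geq 3$ and there exist components $T_1,T_2$ of $T-x$ such that each contains exactly one broom vertex of $T$ and $d(y,y')<d$ for all leaves $y\in V(T_1)$, $y'\in V(T_2)$. For such $x,T_1,T_2$ and the broom vertex $y_1'$ of $T_1$, the tree $T_2\xrightarrow{T} y_1'$ is obtained from $T$ by deleting all vertices of $T_2$ and attaching $|V(T_2)|$ new leaves to $y_1'$. *)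

theory Defs
  imports Complex_Main
begin

definition simple_graph :: "'a set \<Rightarrow> 'a set set \<Rightarrow> bool" where
  "simple_graph V E \<longleftrightarrow> finite V \<and>
     (\<forall>e\<in>E. \<exists>u v. e = {u, v} \<and> u \<in> V \<and> v \<in> V \<and> u \<noteq> v)"

definition adj :: "'a set set \<Rightarrow> 'a \<Rightarrow> 'a \<Rightarrow> bool" where
  "adj E u v \<longleftrightarrow> {u, v} \<in> E"

fun walk :: "'a set set \<Rightarrow> 'a list \<Rightarrow> bool" where
  "walk E [] = False"
| "walk E [v] = True"
| "walk E (u # v # xs) = (adj E u v \<and> walk E (v # xs))"

definition connected_graph :: "'a set \<Rightarrow> 'a set set \<Rightarrow> bool" where
  "connected_graph V E \<longleftrightarrow> V \<noteq> {} \<and>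
     (\<forall>u\<in>V. \<forall>v\<in>V. \<exists>xs. walk E xs \<and> hd xs = u \<and> last xs = v)"

definition has_cycle :: "'a set set \<Rightarrow> bool" where
  "has_cycle E \<longleftrightarrow> (\<exists>xs. length xs \<ge> 3 \<and> distinct xs \<and> walk E xs \<and> adj E (last xs) (hd xs))"

definition tree :: "'a set \<Rightarrow> 'a set set \<Rightarrow> bool" where
  "tree V E \<longleftrightarrow> simple_graph V E \<and> connected_graph V E \<and> \<not> has_cycle E"

definition gdist :: "'a set set \<Rightarrow> 'a \<Rightarrow> 'a \<Rightarrow> nat" where
  "gdist E u v = (LEAST n. \<exists>xs. walk E xs \<and> hd xs = u \<and> last xs = v \<and> length xs = Suc n)"

definition wiener :: "'a set \<Rightarrow> 'a set set \<Rightarrow> nat" where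
  "wiener V E = (\<Sum>u\<in>V. \<Sum>v\<in>V. gdist E u v) div 2"

definition diameter :: "'a set \<Rightarrow> 'a set set \<Rightarrow> nat" where
  "diameter V E = Max {gdist E u v | u v. u \<in> V \<and> v \<in> V}"

definition max_wiener_tree :: "'a set \<Rightarrow> 'a set set \<Rightarrow> bool" where
  "max_wiener_tree V E \<longleftrightarrow> tree V E \<and>
     (\<forall>(V'::'a set) (E'::'a set set). tree V' E' \<and> card V' = card V \<and> diameter V' E' = diameter V E
        \<longrightarrow> wiener V' E' \<le> wiener V E)"

definition degree :: "'a set set \<Rightarrow> 'a \<Rightarrow> nat" where
  "degree E v = card {u. adj E v u}"

definition leaf :: "'a set \<Rightarrow> 'a set set \<Rightarrow> 'a \<Rightarrow> bool" where
  "leaf V E v \<longleftrightarrow> v \<in> V \<and> degree E v = 1"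

definition broom_vertex :: "'a set \<Rightarrow> 'a set set \<Rightarrow> 'a \<Rightarrow> bool" where
  "broom_vertex V E v \<longleftrightarrow> v \<in> V \<and> (\<exists>y. leaf V E y \<and> adj E v y)"

definition component :: "'a set \<Rightarrow> 'a set set \<Rightarrow> 'a set \<Rightarrow> bool" where
  "component V E C \<longleftrightarrow> (\<exists>u\<in>V. C = {v\<in>V. \<exists>xs. walk E xs \<and> set xs \<subseteq> V \<and> hd xs = u \<and> last xs = v})"

definition comp_minus :: "'a set \<Rightarrow> 'a set set \<Rightarrow> 'a \<Rightarrow> 'a set \<Rightarrow> bool" where
  "comp_minus V E x C \<longleftrightarrow> component (V - {x}) {e\<in>E. x \<notin> e} C"

definition special_witness :: "'a set \<Rightarrow> 'a set set \<Rightarrow> 'a \<Rightarrow> 'a set \<Rightarrow> 'a set \<Rightarrow> bool" where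
  "special_witness V E x T1 T2 \<longleftrightarrow>
     comp_minus V E x T1 \<and> comp_minus V E x T2 \<and> T1 \<noteq> T2 \<and>
     card {b\<in>T1. broom_vertex V E b} = 1 \<and> card {b\<in>T2. broom_vertex V E b} = 1 \<and>
     (\<forall>y\<in>T1. \<forall>y'\<in>T2. leaf V E y \<and> leaf V E y' \<longrightarrow> gdist E y y' < diameter V E)"

definition special_vertex :: "'a set \<Rightarrow> 'a set set \<Rightarrow> 'a \<Rightarrow> bool" where
  "special_vertex V E x \<longleftrightarrow> x \<in> V \<and> degree E x \<ge> 3 \<and> (\<exists>T1 T2. special_witness V E x T1 T2)"

text \<open>The tree T2 -> y1': delete the vertices of T2 and attach |V(T2)| new leaves to y1'.
  Up to isomorphism we reuse the (deleted) vertices of T2 as the new leaves.\<close>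
definition move_edges :: "'a set set \<Rightarrow> 'a set \<Rightarrow> 'a \<Rightarrow> 'a set set" where
  "move_edges E T2 y = {e\<in>E. e \<inter> T2 = {}} \<union> {{y, z} | z. z \<in> T2}"

end

theory Submission
  imports Defs
begin


lemma adj_sym: "adj E u v = adj E v u"
  by (simp add: adj_def insert_commute)

lemma walk_nonempty: "walk E xs \<Longrightarrow> xs \<noteq> []"
  by (cases xs) auto

lemma walk_iff: "walk E xs \<longleftrightarrow> xs \<noteq> [] \<and> (\<forall>i. Suc i < length xs \<longrightarrow> adj E (xs!i) (xs!Suc i))"
proof (induction xs rule: walk.induct)
  case (3 E u v xs)
  show ?case
  proof
    assume "walk E (u # v # xs)"
    then show "u # v # xs \<noteq> [] \<and> (\<forall>i. Suc i < length (u # v # xs) \<longrightarrow> adj E ((u # v # xs) ! i) ((u # v # xs) ! Suc i))"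
      using 3 by (auto simp: less_Suc_eq_0_disj)
  next
    assume H: "u # v # xs \<noteq> [] \<and> (\<forall>i. Suc i < length (u # v # xs) \<longrightarrow> adj E ((u # v # xs) ! i) ((u # v # xs) ! Suc i))"
    then have "adj E u v" by (metis Suc_less_eq length_Cons nth_Cons_0 nth_Cons_Suc zero_less_Suc)
    moreover have "\<forall>i. Suc i < length (v # xs) \<longrightarrow> adj E ((v # xs) ! i) ((v # xs) ! Suc i)"
      using H by (metis Suc_less_eq length_Cons nth_Cons_Suc)
    ultimately show "walk E (u # v # xs)" using 3 by simp
  qed
qed (auto)

lemma walk_append: "xs \<noteq> [] \<Longrightarrow> ys \<noteq> [] \<Longrightarrow>
   walk E (xs @ ys) \<longleftrightarrow> walk E xs \<and> walk E ys \<and> adj E (last xs) (hd ys)"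
proof (induction xs rule: walk.induct)
  case (2 E v)
  then show ?case by (cases ys) auto
next
  case (3 E u v xs)
  then show ?case by auto
qed auto

lemma walk_rev: "walk E (rev xs) = walk E xs"
proof (induction xs rule: walk.induct)
  case (3 E u v xs)
  have "walk E (rev (u # v # xs)) = walk E (rev (v # xs) @ [u])" by simp
  also have "\<dots> = (walk E (rev (v#xs)) \<and> adj E v u)"
    by (subst walk_append) (auto simp: last_rev)
  finally show ?case using 3 by (auto simp: adj_sym)
qed auto

lemma walk_take: "walk E xs \<Longrightarrow> 0 < k \<Longrightarrow> walk E (take k xs)"
  by (auto simp: walk_iff)

lemma walk_drop: "walk E xs \<Longrightarrow> k < length xs \<Longrightarrow> walk E (drop k xs)"
  by (auto simp: walk_iff)

definition reach :: "'a set set \<Rightarrow> 'a \<Rightarrow> 'a \<Rightarrow> bool" where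
  "reach E u v \<longleftrightarrow> (\<exists>xs. walk E xs \<and> hd xs = u \<and> last xs = v)"

lemma gdist_le: "walk E xs \<Longrightarrow> hd xs = u \<Longrightarrow> last xs = v \<Longrightarrow> gdist E u v \<le> length xs - 1"
  unfolding gdist_def
  by (rule Least_le) (use walk_nonempty in fastforce)

lemma gdist_ex: assumes "reach E u v"
  shows "\<exists>xs. walk E xs \<and> hd xs = u \<and> last xs = v \<and> length xs = Suc (gdist E u v)"
proof -
  obtain xs where "walk E xs" "hd xs = u" "last xs = v" using assms reach_def by metis
  then have "\<exists>n xs. walk E xs \<and> hd xs = u \<and> last xs = v \<and> length xs = Suc n"
    using walk_nonempty by (metis Suc_pred length_greater_0_conv)
  then show ?thesis unfolding gdist_def by (rule LeastI_ex)
qed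

lemma geodesic_distinct:
  assumes "walk E xs" "length xs = Suc (gdist E (hd xs) (last xs))"
  shows "distinct xs"
proof (rule ccontr)
  assume "\<not> distinct xs"
  then obtain a v b c where xs: "xs = a @ [v] @ b @ [v] @ c" using not_distinct_decomp by blast
  let ?ys = "a @ [v] @ c"
  have w: "walk E ?ys"
  proof -
    have "walk E (a @ [v])"
      using assms(1) walk_take[of E xs "length a + 1"] by (simp add: xs)
    moreover have "walk E (v # c)"
      using assms(1) walk_drop[of E xs "length a + length b + 1"] by (simp add: xs)
    ultimately show ?thesis
      by (cases c) (auto simp: walk_append[of "a @ [v]" "_ # _", simplified])
  qed
  have "hd ?ys = hd xs" "last ?ys = last xs" by (auto simp: xs hd_append)
  then have "gdist E (hd xs) (last xs) \<le> length ?ys - 1" using gdist_le[OF w] by simp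
  then show False using assms(2) by (simp add: xs)
qed

lemma reach_sym: "reach E u v \<Longrightarrow> reach E v u"
  unfolding reach_def by (metis walk_rev hd_rev last_rev)

lemma walk_concat: "walk E xs \<Longrightarrow> walk E ys \<Longrightarrow> last xs = hd ys \<Longrightarrow>
  walk E (xs @ tl ys) \<and> hd (xs @ tl ys) = hd xs \<and> last (xs @ tl ys) = last ys \<and>
  length (xs @ tl ys) = length xs + length ys - 1"
proof -
  assume a: "walk E xs" "walk E ys" "last xs = hd ys"
  then have ne: "xs \<noteq> []" "ys \<noteq> []" using walk_nonempty by auto
  show ?thesis
  proof (cases "tl ys")
    case Nil
    then have "ys = [hd ys]" using ne by (cases ys) auto
    then show ?thesis using a ne Nil by (metis append_Nil2 hd_append2 last_ConsL length_Cons list.size(3) add_Suc_right add_0_right diff_Suc_1)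
  next
    case (Cons z zs)
    then have ys: "ys = hd ys # z # zs" using ne by (cases ys) auto
    then have "walk E (z # zs)" "adj E (hd ys) z" using a(2) by (metis walk.simps(3))+
    then have "walk E (xs @ tl ys)" using a ne Cons by (simp add: walk_append)
    moreover have "last (xs @ tl ys) = last ys" using Cons ys by (metis last_ConsR last_appendR list.distinct(1))
    moreover have "length ys = Suc (Suc (length zs))" using ys by (metis length_Cons)
    ultimately show ?thesis using ne Cons by (auto simp: hd_append)
  qed
qed

lemma reach_trans: "reach E u v \<Longrightarrow> reach E v w \<Longrightarrow> reach E u w"
  unfolding reach_def by (metis walk_concat)

lemma reach_refl: "reach E u u"
  unfolding reach_def by (rule exI[of _ "[u]"]) simp

lemma reach_adj: "adj E u v \<Longrightarrow> reach E u v"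
  unfolding reach_def by (rule exI[of _ "[u,v]"]) simp

lemma gdist_sym: "gdist E u v = gdist E v u"
proof -
  have "\<And>n. (\<exists>xs. walk E xs \<and> hd xs = u \<and> last xs = v \<and> length xs = Suc n) =
            (\<exists>xs. walk E xs \<and> hd xs = v \<and> last xs = u \<and> length xs = Suc n)"
    by (metis walk_rev hd_rev last_rev length_rev)
  then show ?thesis unfolding gdist_def by simp
qed

lemma gdist_triangle: assumes "reach E u v" "reach E v w"
  shows "gdist E u w \<le> gdist E u v + gdist E v w"
proof -
  obtain xs where xs: "walk E xs" "hd xs = u" "last xs = v" "length xs = Suc (gdist E u v)"
    using gdist_ex[OF assms(1)] by blast
  obtain ys where ys: "walk E ys" "hd ys = v" "last ys = w" "length ys = Suc (gdist E v w)"
    using gdist_ex[OF assms(2)] by blast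
  from walk_concat[OF xs(1) ys(1)] xs ys have
    "walk E (xs @ tl ys)" "hd (xs @ tl ys) = u" "last (xs @ tl ys) = w"
    "length (xs @ tl ys) = Suc (gdist E u v) + Suc (gdist E v w) - 1" by auto
  then show ?thesis using gdist_le by fastforce
qed

lemma gdist_refl[simp]: "gdist E u u = 0"
  using gdist_le[of E "[u]" u u] by simp

lemma gdist_adj: "adj E u v \<Longrightarrow> gdist E u v \<le> 1"
  using gdist_le[of E "[u,v]" u v] by simp

lemma gdist_0: "reach E u v \<Longrightarrow> gdist E u v = 0 \<Longrightarrow> u = v"
  using gdist_ex[of E u v] by (auto simp: length_Suc_conv)

lemma gdist_1: "reach E u v \<Longrightarrow> gdist E u v = 1 \<Longrightarrow> adj E u v"
  using gdist_ex[of E u v] by (auto simp: length_Suc_conv)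

lemma gdist_lip: "reach E s u \<Longrightarrow> adj E u v \<Longrightarrow> gdist E s v \<le> gdist E s u + 1"
  using gdist_triangle[of E s u v] gdist_adj[of E u v] reach_adj[of E u v] by linarith

lemma walk_Cons_iff: "walk E (a # xs) \<longleftrightarrow> (xs = [] \<or> (adj E a (hd xs) \<and> walk E xs))"
  by (cases xs) auto

lemma cycle_from_fork:
  assumes w1: "walk E (a # xs)" and d1: "distinct (a # xs)"
    and w2: "walk E (a # ys)" and d2: "distinct (a # ys)"
    and ne: "xs \<noteq> []" "ys \<noteq> []" and l: "last xs = last ys" and hb: "hd xs \<noteq> hd ys"
  shows "has_cycle E"
proof -
  have wx: "walk E xs" and wy: "walk E ys" and ab: "adj E a (hd xs)" "adj E a (hd ys)"
    using w1 w2 ne walk_Cons_iff by metis+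
  have "\<exists>z\<in>set xs. z \<in> set ys" using ne l by (metis last_in_set)
  then obtain P m Q where xs: "xs = P @ m # Q" and mys: "m \<in> set ys" and Pn: "\<forall>z\<in>set P. z \<notin> set ys"
    using split_list_first_prop[of xs "\<lambda>z. z \<in> set ys"] by blast
  obtain U Z where ys: "ys = U @ m # Z" using mys split_list by metis
  have wP: "walk E (P @ [m])" using walk_take[OF wx, of "length P + 1"] by (simp add: xs)
  have wU: "walk E (U @ [m])" using walk_take[OF wy, of "length U + 1"] by (simp add: ys)
  then have wU': "walk E (m # rev U)" using walk_rev[of E "U @ [m]"] by simp
  have c1: "walk E ((P @ [m]) @ tl (m # rev U))"
    using walk_concat[OF wP wU'] by simp
  have hdP: "hd (P @ [m]) = hd xs" by (simp add: xs hd_append)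
  let ?c = "a # P @ m # rev U"
  have wc: "walk E ?c"
    using c1 ab(1) hdP walk_Cons_iff[of E a "P @ m # rev U"] by (cases P) auto
  have lastc: "last ?c = hd ys"
    by (cases U) (auto simp: ys)
  have closing: "adj E (last ?c) (hd ?c)" using lastc ab(2) adj_sym by fastforce
  have dc: "distinct ?c"
    using d1 d2 Pn by (auto simp: xs ys)
  have len: "length ?c \<ge> 3"
  proof (cases "P = [] \<and> U = []")
    case True
    then show ?thesis using hb xs ys by simp
  next
    case False
    then have "length P + length U \<ge> 1" by (cases P; cases U; auto)
    then show ?thesis by simp
  qed
  show ?thesis unfolding has_cycle_def using wc dc closing len by (intro exI[of _ ?c]) simp
qed

lemma unique_path:
  assumes "\<not> has_cycle E" "walk E xs" "distinct xs" "walk E ys" "distinct ys"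
    "hd xs = hd ys" "last xs = last ys"
  shows "xs = ys"
  using assms(2-)
proof (induction xs arbitrary: ys)
  case Nil
  then show ?case by simp
next
  case (Cons a xs')
  obtain ys' where ys: "ys = a # ys'" using Cons.prems walk_nonempty by (cases ys) auto
  show ?case
  proof (cases "xs' = []")
    case True
    then have "last ys = a" using Cons.prems by simp
    moreover have "ys' \<noteq> [] \<Longrightarrow> last ys \<in> set ys'" using ys by simp
    ultimately show ?thesis using Cons.prems ys True by (cases "ys' = []") auto
  next
    case xne: False
    show ?thesis
    proof (cases "ys' = []")
      case True
      then have "last (a # xs') = a" using Cons.prems ys by simp
      then show ?thesis using Cons.prems ys True xne by auto
    next
      case yne: False
      show ?thesis
      proof (cases "hd xs' = hd ys'")
        case True
        have "walk E xs'" "walk E ys'" using Cons.prems ys xne yne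
          by (cases xs'; cases ys'; auto)+
        moreover have "last xs' = last ys'" using Cons.prems ys xne yne by simp
        ultimately have "xs' = ys'" using Cons.IH[of ys'] Cons.prems ys True by simp
        then show ?thesis using ys by simp
      next
        case False
        have "has_cycle E"
          using cycle_from_fork[of E a xs' ys'] Cons.prems ys xne yne False by simp
        then show ?thesis using assms(1) by simp
      qed
    qed
  qed
qed


lemma walk_transfer: "walk E xs \<Longrightarrow> (\<And>u v. adj E u v \<Longrightarrow> u \<in> set xs \<Longrightarrow> v \<in> set xs \<Longrightarrow> adj E' u v)
  \<Longrightarrow> walk E' xs"
  unfolding walk_iff by (metis Suc_lessD nth_mem)

lemma enter_lemma:
  assumes "walk E xs" "hd xs \<notin> S" "i < length xs" "xs ! i \<in> S"
    and bd: "\<forall>u v. adj E u v \<longrightarrow> u \<in> S \<longrightarrow> v \<notin> S \<longrightarrow> v = c"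
  shows "\<exists>j<i. xs ! j = c"
  using assms(3,4)
proof (induction i)
  case 0
  then show ?case using assms(1,2) walk_nonempty by (metis hd_conv_nth)
next
  case (Suc i)
  have "adj E (xs!i) (xs!Suc i)" using assms(1) Suc.prems walk_iff by blast
  then have a: "adj E (xs!Suc i) (xs!i)" using adj_sym by metis
  show ?case
  proof (cases "xs ! i \<in> S")
    case True
    then show ?thesis using Suc by (meson Suc_lessD less_SucI)
  next
    case False
    then show ?thesis using bd a Suc.prems by blast
  qed
qed

lemma cut_lemma:
  assumes r: "reach E a z" and aS: "a \<notin> S" and zS: "z \<in> S"
    and bd: "\<forall>u v. adj E u v \<longrightarrow> u \<in> S \<longrightarrow> v \<notin> S \<longrightarrow> v = c"
  shows "gdist E a z = gdist E a c + gdist E c z"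
proof -
  obtain g where g: "walk E g" "hd g = a" "last g = z" "length g = Suc (gdist E a z)"
    using gdist_ex[OF r] by blast
  have ne: "g \<noteq> []" using g walk_nonempty by auto
  let ?i = "length g - 1"
  have gi: "g ! ?i = z" using g(3) ne last_conv_nth[of g] by simp
  have iL: "?i < length g" using ne by simp
  have hS: "hd g \<notin> S" using g(2) aS by simp
  have zS': "g ! ?i \<in> S" using gi zS by simp
  obtain j where j: "j < ?i" "g ! j = c"
    using enter_lemma[of E g S ?i c, OF g(1) hS iL zS' bd] by blast
  have jl: "j < length g" using j(1) by simp
  have w1: "walk E (take (Suc j) g)" using walk_take[OF g(1)] by simp
  have "take (Suc j) g = take j g @ [g ! j]" using jl by (rule take_Suc_conv_app_nth)
  then have l1: "last (take (Suc j) g) = c" using j(2) by simp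
  have "hd (take (Suc j) g) = hd g" using ne by (simp add: hd_take)
  then have h1: "hd (take (Suc j) g) = a" "last (take (Suc j) g) = c" using g(2) l1 by auto
  have w2: "walk E (drop j g)" using walk_drop[OF g(1) jl] .
  have "hd (drop j g) = g ! j" using jl by (rule hd_drop_conv_nth)
  moreover have "last (drop j g) = last g" using jl by simp
  ultimately have h2: "hd (drop j g) = c" "last (drop j g) = z" using j(2) g(3) by auto
  have "gdist E a c \<le> length (take (Suc j) g) - 1" using gdist_le[OF w1 h1] .
  moreover have "gdist E c z \<le> length (drop j g) - 1" using gdist_le[OF w2 h2] .
  ultimately have le: "gdist E a c + gdist E c z \<le> gdist E a z" using j g(4) by simp
  have "reach E a c" "reach E c z" using w1 h1 w2 h2 reach_def by metis+
  then have "gdist E a z \<le> gdist E a c + gdist E c z" by (rule gdist_triangle)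
  then show ?thesis using le by simp
qed

lemma avoid_lemma:
  assumes w: "walk E xs" and d: "distinct xs" and h: "hd xs \<notin> S" and l: "last xs \<notin> S"
    and bd: "\<forall>u v. adj E u v \<longrightarrow> u \<in> S \<longrightarrow> v \<notin> S \<longrightarrow> v = c"
  shows "set xs \<inter> S = {}"
proof (rule ccontr)
  assume "set xs \<inter> S \<noteq> {}"
  then obtain i where i: "i < length xs" "xs ! i \<in> S" by (metis disjoint_iff in_set_conv_nth)
  obtain j where j: "j < i" "xs ! j = c" using enter_lemma[of E xs S i c, OF w h i bd] by blast
  have ne: "xs \<noteq> []" using w walk_nonempty by auto
  have wr: "walk E (rev xs)" using w walk_rev by metis
  have "hd (rev xs) \<notin> S" using l ne by (simp add: hd_rev)
  moreover have "rev xs ! (length xs - Suc i) = xs ! i" using i by (simp add: rev_nth)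
  moreover have "length xs - Suc i < length (rev xs)" using i by simp
  ultimately obtain k where k: "k < length xs - Suc i" "rev xs ! k = c"
    using enter_lemma[of E "rev xs" S "length xs - Suc i" c, OF wr _ _ _ bd] i by auto
  have "xs ! (length xs - Suc k) = c" using k by (simp add: rev_nth)
  moreover have "length xs - Suc k \<noteq> j" "length xs - Suc k < length xs" using k j by auto
  ultimately show False using d j i by (metis distinct_Ex1 nth_mem nth_eq_iff_index_eq order.strict_trans)
qed

locale rtree =
  fixes V :: "'a set" and E :: "'a set set" and x :: 'a
  assumes tr: "tree V E" and xV: "x \<in> V"
begin

definition lev :: "'a \<Rightarrow> nat" where "lev v = gdist E x v"

lemma sg: "simple_graph V E" and finV: "finite V" and nocyc: "\<not> has_cycle E"
  using tr unfolding tree_def simple_graph_def by auto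

lemma adj_V: "adj E u v \<Longrightarrow> u \<in> V \<and> v \<in> V \<and> u \<noteq> v"
proof -
  assume "adj E u v"
  then have "{u, v} \<in> E" by (simp add: adj_def)
  then obtain a b where "{u, v} = {a, b}" "a \<in> V" "b \<in> V" "a \<noteq> b"
    using sg unfolding simple_graph_def by blast
  then show ?thesis by (metis doubleton_eq_iff)
qed

lemma reachV: "u \<in> V \<Longrightarrow> v \<in> V \<Longrightarrow> reach E u v"
  using tr unfolding tree_def connected_graph_def reach_def by blast

lemma lev_x[simp]: "lev x = 0" by (simp add: lev_def)

lemma lev_0: "v \<in> V \<Longrightarrow> lev v = 0 \<Longrightarrow> v = x"
  using gdist_0 reachV xV unfolding lev_def by metis

lemma lev_edge: "adj E u v \<Longrightarrow> lev v \<le> lev u + 1"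
  using gdist_lip reachV xV adj_V unfolding lev_def by metis

lemma lev_index: "walk E xs \<Longrightarrow> hd xs = x \<Longrightarrow> i < length xs \<Longrightarrow> lev (xs!i) \<le> i"
proof -
  assume a: "walk E xs" "hd xs = x" "i < length xs"
  have "walk E (take (Suc i) xs)" using walk_take[OF a(1)] by simp
  moreover have "hd (take (Suc i) xs) = x" using a by (metis hd_take zero_less_Suc)
  moreover have "last (take (Suc i) xs) = xs!i" using a(3) by (simp add: take_Suc_conv_app_nth)
  ultimately show ?thesis using gdist_le a(3) unfolding lev_def by fastforce
qed

lemma geo_x: "v \<in> V \<Longrightarrow> \<exists>g. walk E g \<and> hd g = x \<and> last g = v \<and> length g = Suc (lev v) \<and> distinct g"
  using gdist_ex[OF reachV[OF xV]] geodesic_distinct unfolding lev_def by metis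

lemma parent_ex: assumes "v \<in> V" "v \<noteq> x" shows "\<exists>u. adj E v u \<and> lev u + 1 = lev v"
proof -
  obtain g where g: "walk E g" "hd g = x" "last g = v" "length g = Suc (lev v)"
    using geo_x[OF assms(1)] by blast
  have "lev v \<noteq> 0" using lev_0 assms by blast
  then have L: "length g \<ge> 2" using g by simp
  let ?u = "g ! (length g - 2)"
  have "adj E ?u (g ! Suc (length g - 2))" using g(1) L walk_iff[of E g] by simp
  moreover have "Suc (length g - 2) = length g - 1" using L by simp
  moreover have "g ! (length g - 1) = v"
  proof -
    have "g \<noteq> []" using L by auto
    then show ?thesis using g(3) last_conv_nth[of g] by simp
  qed
  ultimately have adj: "adj E ?u v" by simp
  have "lev ?u \<le> length g - 2" using lev_index[OF g(1,2)] L by simp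
  moreover have "lev v \<le> lev ?u + 1" using lev_edge[OF adj] .
  ultimately have "lev ?u + 1 = lev v" using g(4) L by simp
  then show ?thesis using adj adj_sym by metis
qed

lemma unique_lower:
  assumes a1: "adj E v u1" and a2: "adj E v u2" and l1: "lev u1 \<le> lev v" and l2: "lev u2 \<le> lev v"
  shows "u1 = u2"
proof (rule ccontr)
  assume ne: "u1 \<noteq> u2"
  have V: "u1 \<in> V" "u2 \<in> V" "v \<noteq> u1" "v \<noteq> u2" using adj_V a1 a2 by auto
  obtain g1 where g1: "walk E g1" "hd g1 = x" "last g1 = u1" "length g1 = Suc (lev u1)" "distinct g1"
    using geo_x V by blast
  obtain g2 where g2: "walk E g2" "hd g2 = x" "last g2 = u2" "length g2 = Suc (lev u2)" "distinct g2"
    using geo_x V by blast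
  have n1: "v \<notin> set g1"
  proof
    assume "v \<in> set g1"
    then obtain i where i: "i < length g1" "g1 ! i = v" by (metis in_set_conv_nth)
    have "lev v \<le> i" using lev_index[OF g1(1,2) i(1)] i(2) by simp
    then have "i = length g1 - 1" using i(1) g1(4) l1 by simp
    then have "g1 ! i = u1" using g1(3) i(1) last_conv_nth[of g1] by fastforce
    then show False using i V by simp
  qed
  have n2: "v \<notin> set g2"
  proof
    assume "v \<in> set g2"
    then obtain i where i: "i < length g2" "g2 ! i = v" by (metis in_set_conv_nth)
    have "lev v \<le> i" using lev_index[OF g2(1,2) i(1)] i(2) by simp
    then have "i = length g2 - 1" using i(1) g2(4) l2 by simp
    then have "g2 ! i = u2" using g2(3) i(1) last_conv_nth[of g2] by fastforce
    then show False using i V by simp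
  qed
  have g1ne: "g1 \<noteq> []" "g2 \<noteq> []" using g1(1) g2(1) walk_nonempty by auto
  have w1: "walk E (g1 @ [v])" using g1 g1ne a1 adj_sym walk_append[of g1 "[v]" E] by fastforce
  have w2: "walk E (g2 @ [v])" using g2 g1ne a2 adj_sym walk_append[of g2 "[v]" E] by fastforce
  have "g1 @ [v] = g2 @ [v]"
    by (rule unique_path[OF nocyc w1 _ w2]) (use g1 g2 n1 n2 g1ne in auto)
  then show False using g1 g2 ne by simp
qed

lemma lev_neq: assumes "adj E u v" shows "lev u \<noteq> lev v"
proof
  assume eq: "lev u = lev v"
  have V: "u \<in> V" "v \<in> V" "u \<noteq> v" using adj_V assms by auto
  show False
  proof (cases "v = x")
    case True
    then have "u = x" using eq lev_0 V by simp
    then show False using V True by simp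
  next
    case False
    obtain w where w: "adj E v w" "lev w + 1 = lev v" using parent_ex V False by blast
    have "u = w" using unique_lower[of v u w] assms adj_sym eq w by fastforce
    then show False using eq w by simp
  qed
qed

lemma adj_lev: "adj E u v \<Longrightarrow> lev v = lev u + 1 \<or> lev u = lev v + 1"
  using lev_edge[of u v] lev_edge[of v u] lev_neq[of u v] adj_sym by fastforce

definition par :: "'a \<Rightarrow> 'a" where "par v = (THE u. adj E v u \<and> lev u + 1 = lev v)"

lemma par: assumes "v \<in> V" "v \<noteq> x" shows "adj E v (par v)" "lev (par v) + 1 = lev v"
proof -
  obtain u where u: "adj E v u" "lev u + 1 = lev v" using parent_ex assms by blast
  have "par v = u" unfolding par_def
    by (rule the_equality) (use u unique_lower[of v u] in fastforce)+
  then show "adj E v (par v)" "lev (par v) + 1 = lev v" using u by auto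
qed

lemma par_unique: assumes "adj E v u" "lev v = lev u + 1" shows "par v = u"
proof -
  have "v \<in> V" "v \<noteq> x" using assms adj_V by auto
  then show ?thesis using par[of v] unique_lower[of v u "par v"] assms by fastforce
qed

definition anc :: "nat \<Rightarrow> 'a \<Rightarrow> 'a" where "anc k v = (par ^^ k) v"

lemma anc_0[simp]: "anc 0 v = v" by (simp add: anc_def)
lemma anc_Suc: "anc (Suc k) v = par (anc k v)" by (simp add: anc_def)
lemma anc_Suc': "anc (Suc k) v = anc k (par v)" by (simp only: anc_def funpow_Suc_right comp_def)
lemma anc_add: "anc (i + j) v = anc i (anc j v)" by (simp add: anc_def funpow_add)

lemma anc_props: "v \<in> V \<Longrightarrow> k \<le> lev v \<Longrightarrow> anc k v \<in> V \<and> lev (anc k v) + k = lev v"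
proof (induction k)
  case (Suc k)
  then have IH: "anc k v \<in> V" "lev (anc k v) + k = lev v" by auto
  then have "anc k v \<noteq> x" using Suc.prems by auto
  then show ?case using par[OF IH(1)] IH adj_V by (auto simp: anc_Suc)
qed simp

lemma anc_adj: "v \<in> V \<Longrightarrow> Suc k \<le> lev v \<Longrightarrow> adj E (anc k v) (anc (Suc k) v)"
proof -
  assume a: "v \<in> V" "Suc k \<le> lev v"
  then have "anc k v \<in> V" "lev (anc k v) + k = lev v" using anc_props by auto
  then have "anc k v \<noteq> x" using a by auto
  then show ?thesis using par \<open>anc k v \<in> V\<close> by (simp add: anc_Suc)
qed

lemma anc_dist: "v \<in> V \<Longrightarrow> k \<le> lev v \<Longrightarrow> gdist E v (anc k v) = k"
proof -
  assume a: "v \<in> V" "k \<le> lev v"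
  have le: "gdist E v (anc j v) \<le> j" if "j \<le> lev v" for j
    using that
  proof (induction j)
    case (Suc j)
    have "gdist E v (anc (Suc j) v) \<le> gdist E v (anc j v) + 1"
      using gdist_lip[OF reachV anc_adj] anc_props a Suc.prems by simp
    then show ?case using Suc by simp
  qed simp
  have AV: "anc k v \<in> V" "lev (anc k v) + k = lev v" using anc_props a by auto
  have "lev v \<le> lev (anc k v) + gdist E (anc k v) v"
    unfolding lev_def by (rule gdist_triangle) (use reachV xV AV a in auto)
  then have "k \<le> gdist E v (anc k v)" using AV gdist_sym by (metis add_le_cancel_left)
  then show ?thesis using le a by (simp add: le_antisym)
qed


lemma comp_sub: "comp_minus V E x C \<Longrightarrow> C \<subseteq> V - {x}"
  unfolding comp_minus_def component_def by auto

lemma comp_closed: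
  assumes C: "comp_minus V E x C" and u: "u \<in> C" and a: "adj E u w" and wx: "w \<noteq> x"
  shows "w \<in> C"
proof -
  let ?E' = "{e\<in>E. x \<notin> e}"
  obtain u0 where u0: "u0 \<in> V - {x}"
    and Ceq: "C = {v\<in>V - {x}. \<exists>xs. walk ?E' xs \<and> set xs \<subseteq> V - {x} \<and> hd xs = u0 \<and> last xs = v}"
    using C unfolding comp_minus_def component_def by blast
  obtain xs where xs: "walk ?E' xs" "set xs \<subseteq> V - {x}" "hd xs = u0" "last xs = u"
    using u Ceq by blast
  have ux: "u \<noteq> x" using u Ceq by blast
  have wV: "w \<in> V" using adj_V a by blast
  have "adj ?E' u w" using a ux wx by (auto simp: adj_def)
  then have "walk ?E' (xs @ [w])" using xs walk_append[of xs "[w]"] walk_nonempty by fastforce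
  moreover have "set (xs @ [w]) \<subseteq> V - {x}" using xs wV wx by auto
  moreover have "hd (xs @ [w]) = u0"
  proof -
    have "xs \<noteq> []" using xs(1) walk_nonempty by blast
    then show ?thesis using xs(3) by (simp add: hd_append)
  qed
  ultimately show ?thesis using Ceq wV wx by (metis (mono_tags, lifting) last_snoc mem_Collect_eq Diff_iff singletonD)
qed

lemma comp_boundary: "comp_minus V E x C \<Longrightarrow> adj E u v \<Longrightarrow> u \<in> C \<Longrightarrow> v \<notin> C \<Longrightarrow> v = x"
  using comp_closed by blast

lemma comp_conn:
  assumes C: "comp_minus V E x C" and u: "u \<in> C" and v: "v \<in> C"
  shows "\<exists>ys. walk E ys \<and> hd ys = u \<and> last ys = v \<and> x \<notin> set ys"
proof -
  let ?E' = "{e\<in>E. x \<notin> e}"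
  obtain u0 where Ceq: "C = {v\<in>V - {x}. \<exists>xs. walk ?E' xs \<and> set xs \<subseteq> V - {x} \<and> hd xs = u0 \<and> last xs = v}"
    using C unfolding comp_minus_def component_def by blast
  obtain xs where xs: "walk ?E' xs" "set xs \<subseteq> V - {x}" "hd xs = u0" "last xs = u"
    using u Ceq by blast
  obtain zs where zs: "walk ?E' zs" "set zs \<subseteq> V - {x}" "hd zs = u0" "last zs = v"
    using v Ceq by blast
  have m: "walk ?E' ys \<Longrightarrow> walk E ys" for ys
    by (erule walk_transfer) (auto simp: adj_def)
  have w1: "walk E (rev xs)" using m[OF xs(1)] walk_rev by metis
  have ne: "xs \<noteq> []" "zs \<noteq> []" using xs zs walk_nonempty by auto
  have "walk E (rev xs @ tl zs) \<and> hd (rev xs @ tl zs) = hd (rev xs) \<and> last (rev xs @ tl zs) = last zs"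
    using walk_concat[OF w1 m[OF zs(1)]] xs zs ne by (simp add: last_rev)
  moreover have "x \<notin> set (rev xs @ tl zs)" using xs(2) zs(2) ne by (auto dest: list.set_sel(2))
  ultimately show ?thesis using xs zs ne by (metis hd_rev)
qed

lemma comp_walk_closed:
  assumes C: "comp_minus V E x C" and w: "walk E ys" and h: "hd ys \<in> C" and nx: "x \<notin> set ys"
  shows "set ys \<subseteq> C"
proof -
  have "ys ! i \<in> C" if "i < length ys" for i
    using that
  proof (induction i)
    case 0
    then show ?case using h by (simp add: hd_conv_nth)
  next
    case (Suc i)
    have "adj E (ys!i) (ys!Suc i)" using w Suc.prems walk_iff by blast
    moreover have "ys ! Suc i \<noteq> x" using nx Suc.prems by (metis nth_mem)
    ultimately show ?case using comp_closed[OF C] Suc by simp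
  qed
  then show ?thesis by (metis in_set_conv_nth subsetI)
qed

lemma comp_sub_eq:
  assumes Ca: "comp_minus V E x Ca" and Cb: "comp_minus V E x Cb" and za: "z \<in> Ca" and zb: "z \<in> Cb"
  shows "Cb \<subseteq> Ca"
proof
  fix v assume "v \<in> Cb"
  then obtain ys where ys: "walk E ys" "hd ys = z" "last ys = v" "x \<notin> set ys"
    using comp_conn[OF Cb zb] by blast
  have "hd ys \<in> Ca" using ys(2) za by simp
  then have "set ys \<subseteq> Ca" using comp_walk_closed[OF Ca ys(1) _ ys(4)] by blast
  moreover have "last ys \<in> set ys" using ys(1) walk_nonempty last_in_set by blast
  ultimately show "v \<in> Ca" using ys(3) by blast
qed

lemma comp_disjoint:
  assumes C1: "comp_minus V E x C1" and C2: "comp_minus V E x C2" and ne: "C1 \<noteq> C2"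
  shows "C1 \<inter> C2 = {}"
proof (rule ccontr)
  assume "C1 \<inter> C2 \<noteq> {}"
  then obtain z where z: "z \<in> C1" "z \<in> C2" by blast
  have "C2 \<subseteq> C1" by (rule comp_sub_eq[OF C1 C2 z])
  moreover have "C1 \<subseteq> C2" by (rule comp_sub_eq[OF C2 C1 z(2) z(1)])
  ultimately show False using ne by blast
qed

end




lemma sum_nat_int2: "2 * (\<Sum>k<m. int k) = int m * (int m - 1)"
  by (induction m) (auto simp: algebra_simps)

lemma sum_absdiff: "3 * (\<Sum>i<m. \<Sum>j<m. \<bar>int i - int j\<bar>) = (int m - 1) * int m * (int m + 1)"
proof (induction m)
  case (Suc m)
  have row: "(\<Sum>j<m. \<bar>int m - int j\<bar>) = (\<Sum>j<m. int m - int j)"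
    by (rule sum.cong) auto
  have col: "(\<Sum>i<m. \<bar>int i - int m\<bar>) = (\<Sum>i<m. int m - int i)"
    by (rule sum.cong) auto
  have "(\<Sum>i<Suc m. \<Sum>j<Suc m. \<bar>int i - int j\<bar>) =
        (\<Sum>i<m. \<Sum>j<m. \<bar>int i - int j\<bar>) + (\<Sum>i<m. \<bar>int i - int m\<bar>) + (\<Sum>j<m. \<bar>int m - int j\<bar>)"
    by (simp add: sum.distrib)
  also have "\<dots> = (\<Sum>i<m. \<Sum>j<m. \<bar>int i - int j\<bar>) + 2 * (int m * int m - (\<Sum>k<m. int k))"
    unfolding row col by (simp add: sum_subtractf)
  finally have e: "(\<Sum>i<Suc m. \<Sum>j<Suc m. \<bar>int i - int j\<bar>) =
     (\<Sum>i<m. \<Sum>j<m. \<bar>int i - int j\<bar>) + 2 * (int m * int m - (\<Sum>k<m. int k))" .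
  show ?case unfolding e using Suc sum_nat_int2[of m] by (simp add: algebra_simps)
qed simp

lemma sum_offdiag: "finite S \<Longrightarrow> (\<Sum>u\<in>S. \<Sum>v\<in>S. (if u = v then 0 else c)) = (c::int) * int (card S) * (int (card S) - 1)"
proof -
  assume f: "finite S"
  have "(\<Sum>v\<in>S. (if u = v then 0 else c)) = c * int (card S) - c" if "u \<in> S" for u
  proof -
    have "(\<Sum>v\<in>S. (if u = v then 0 else c)) = (\<Sum>v\<in>S. c - (if v = u then c else 0))"
      by (rule sum.cong) auto
    also have "\<dots> = c * int (card S) - c" using f that by (simp add: sum_subtractf sum.delta)
    finally show ?thesis .
  qed
  then have "(\<Sum>u\<in>S. \<Sum>v\<in>S. (if u = v then 0 else c)) = (\<Sum>u\<in>S. c * int (card S) - c)"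
    by (rule sum.cong[OF refl])
  then show ?thesis by (simp add: algebra_simps)
qed

lemma sum_split4:
  assumes "finite A" "finite B" "A \<inter> B = {}"
  shows "(\<Sum>u\<in>A \<union> B. \<Sum>v\<in>A \<union> B. f u v) =
    (\<Sum>u\<in>A. \<Sum>v\<in>A. f u v) + (\<Sum>u\<in>A. \<Sum>v\<in>B. f u v) + (\<Sum>u\<in>B. \<Sum>v\<in>A. f u v) + (\<Sum>u\<in>B. \<Sum>v\<in>B. f u v)"
  using assms by (simp add: sum.union_disjoint sum.distrib add_ac)

lemma sum_even:
  assumes "finite S" "\<And>u v. f u v = f v u" "\<And>u. f u u = 0"
  shows "even (\<Sum>u\<in>S. \<Sum>v\<in>S. (f u v :: nat))"
  using assms(1)
proof (induction S rule: finite_induct)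
  case (insert a F)
  have "(\<Sum>u\<in>insert a F. \<Sum>v\<in>insert a F. f u v) =
        (f a a + (\<Sum>v\<in>F. f a v)) + (\<Sum>u\<in>F. f u a + (\<Sum>v\<in>F. f u v))"
    using insert by simp
  also have "\<dots> = 2 * (\<Sum>v\<in>F. f a v) + (\<Sum>u\<in>F. \<Sum>v\<in>F. f u v)"
    using assms(2,3) by (simp add: sum.distrib)
  finally have e: "(\<Sum>u\<in>insert a F. \<Sum>v\<in>insert a F. f u v) = 2 * (\<Sum>v\<in>F. f a v) + (\<Sum>u\<in>F. \<Sum>v\<in>F. f u v)" .
  show ?case unfolding e using insert.IH by simp
qed simp

context rtree begin

lemma nbrs_finite: "finite {u. adj E v u}"
  using finV by (rule finite_subset[rotated]) (use adj_V in blast)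

lemma leaf_nbrs: assumes "leaf V E v" "adj E v u" shows "{w. adj E v w} = {u}"
proof -
  have "card {w. adj E v w} = 1" using assms(1) by (simp add: leaf_def degree_def)
  then obtain a where "{w. adj E v w} = {a}" using card_1_singletonE by blast
  then show ?thesis using assms(2) by auto
qed

lemma nbrs_leaf: assumes "v \<in> V" "{w. adj E v w} = {u}" shows "leaf V E v"
  using assms by (simp add: leaf_def degree_def)

lemma not_leaf2: assumes "adj E v u1" "adj E v u2" "u1 \<noteq> u2" shows "\<not> leaf V E v"
proof
  assume "leaf V E v"
  then have "{w. adj E v w} = {u1}" using leaf_nbrs assms(1) by blast
  then show False using assms by auto
qed

lemma comp_only_x:
  assumes C: "comp_minus V E x C" and u: "u \<in> C" and v: "v \<in> C" and nb: "{w. adj E u w} = {x}"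
  shows "v = u"
proof -
  obtain ys where ys: "walk E ys" "hd ys = u" "last ys = v" "x \<notin> set ys"
    using comp_conn[OF C u v] by blast
  have ne: "ys \<noteq> []" using ys walk_nonempty by blast
  show ?thesis
  proof (cases "length ys \<ge> 2")
    case True
    then have "adj E (ys!0) (ys!1)" using ys(1) walk_iff[of E ys] by simp
    moreover have "ys!0 = u" using ys(2) ne by (simp add: hd_conv_nth)
    ultimately have "ys!1 = x" using nb by blast
    moreover have "ys!1 \<in> set ys" using True by simp
    ultimately show ?thesis using ys(4) by simp
  next
    case False
    then have "length ys = 1" using ne by (cases ys) (auto simp: not_le less_Suc_eq)
    then have "ys = [u]" using ys(2) by (cases ys) auto
    then show ?thesis using ys(3) by simp
  qed
qed


lemma comp_struct:
  assumes C: "comp_minus V E x C" and one: "card {b\<in>C. broom_vertex V E b} = 1"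
    and y: "y \<in> C" "leaf V E y" and xnl: "\<not> leaf V E x"
  shows "par y \<in> C" "lev y \<ge> 2" "lev (par y) + 1 = lev y" "adj E y (par y)"
    "C = (\<lambda>k. anc k (par y)) ` {..<lev y - 1} \<union> {z\<in>C. leaf V E z}"
    "(\<lambda>k. anc k (par y)) ` {..<lev y - 1} \<inter> {z\<in>C. leaf V E z} = {}"
    "inj_on (\<lambda>k. anc k (par y)) {..<lev y - 1}"
    "\<And>z. z \<in> C \<Longrightarrow> leaf V E z \<Longrightarrow> par z = par y \<and> lev z = lev y \<and> adj E z (par y)"
    "\<And>k. k < lev y - 1 \<Longrightarrow> lev (anc k (par y)) + k + 1 = lev y"
proof -
  define b where "b = par y"
  define p where "p = lev y"
  have CV: "C \<subseteq> V - {x}" using comp_sub[OF C] .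
  have yV: "y \<in> V" "y \<noteq> x" using y CV by auto
  have yb: "adj E y b" "lev b + 1 = p" using par[OF yV] by (auto simp: b_def p_def)
  have ynb: "{w. adj E y w} = {b}" using leaf_nbrs[OF y(2) yb(1)] .
  obtain bb where bb: "{c\<in>C. broom_vertex V E c} = {bb}" using one card_1_singletonE by blast
  have bbC: "bb \<in> C" "broom_vertex V E bb" using bb by auto
  have bx: "b \<noteq> x"
  proof
    assume bx: "b = x"
    have "bb = y" using comp_only_x[OF C y(1) bbC(1)] ynb bx by simp
    then have "broom_vertex V E y" using bbC(2) by simp
    then obtain l where l: "leaf V E l" "adj E y l" unfolding broom_vertex_def by blast
    then have "l \<in> {w. adj E y w}" by simp
    then have "l = x" unfolding ynb bx by simp
    then show False using xnl \<open>leaf V E l\<close> by simp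
  qed
  have bC: "b \<in> C" using comp_closed[OF C y(1) yb(1) bx] .
  have bV: "b \<in> V" using bC CV by auto
  have "adj E b y" using yb(1) adj_sym by metis
  then have bbroom: "broom_vertex V E b" using bV y(2) unfolding broom_vertex_def by blast
  have broom_uniq: "c = b" if "c \<in> C" "broom_vertex V E c" for c
  proof -
    have "c \<in> {c\<in>C. broom_vertex V E c}" "b \<in> {c\<in>C. broom_vertex V E c}" using that bC bbroom by simp_all
    then show ?thesis unfolding bb by simp
  qed
  have levb: "lev b \<ge> 1" using bx lev_0 bV by (metis less_one not_le)
  then have p2: "p \<ge> 2" using yb by simp
  have main: "(leaf V E v \<and> par v = b) \<or> (\<exists>k<p-1. v = anc k b)" if vC: "v \<in> C" for v
  proof -
    have vV: "v \<in> V" "v \<noteq> x" using vC CV by auto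
    define D where "D = {w \<in> V. lev v \<le> lev w \<and> anc (lev w - lev v) w = v}"
    have vD: "v \<in> D" using vV by (simp add: D_def)
    have finD: "finite D" using finV by (simp add: D_def)
    have fin2: "finite (lev ` D)" "lev ` D \<noteq> {}" using finD vD by auto
    have "Max (lev ` D) \<in> lev ` D" using Max_in[OF fin2] .
    then obtain w where wD: "w \<in> D" and wM: "lev w = Max (lev ` D)" by auto
    have wmax: "lev u \<le> lev w" if "u \<in> D" for u
      using Max_ge[OF fin2(1)] that wM by simp
    have wV: "w \<in> V" and wl: "lev v \<le> lev w" and wa: "anc (lev w - lev v) w = v" using wD by (auto simp: D_def)
    define m where "m = lev w - lev v"
    have lvpos: "lev v \<ge> 1" using vV lev_0 by (metis less_one not_le)
    have inC: "anc (m - i) w \<in> C" if "i \<le> m" for i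
      using that
    proof (induction i)
      case 0
      then show ?case using wa vC by (simp add: m_def)
    next
      case (Suc i)
      define j where "j = m - Suc i"
      have j1: "m - i = Suc j" using Suc.prems by (simp add: j_def)
      have IH: "anc (Suc j) w \<in> C" using Suc j1 by simp
      have "Suc j \<le> lev w" using Suc.prems j1 by (simp add: m_def)
      then have ad: "adj E (anc j w) (anc (Suc j) w)" using anc_adj wV by blast
      have "lev (anc j w) + j = lev w" using anc_props wV \<open>Suc j \<le> lev w\<close> by simp
      then have "anc j w \<noteq> x" using j1 lvpos Suc.prems by (auto simp: m_def)
      then have "anc j w \<in> C" using comp_closed[OF C IH] ad adj_sym by metis
      then show ?case by (simp add: j_def)
    qed
    have wC: "w \<in> C" using inC[of m] by simp
    have wx: "w \<noteq> x" using wC CV by auto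
    have wpar: "adj E w (par w)" "lev (par w) + 1 = lev w" using par wV wx by auto
    have nbw: "{u. adj E w u} = {par w}"
    proof -
      have "u = par w" if a: "adj E w u" for u
      proof (cases "lev u = lev w + 1")
        case True
        have pu: "par u = w" using par_unique[of u w] a adj_sym True by metis
        have uV: "u \<in> V" using adj_V a by blast
        have "anc (lev u - lev v) u = anc (Suc m) u" using True wl by (simp add: m_def Suc_diff_le)
        also have "\<dots> = anc m (par u)" by (rule anc_Suc')
        also have "\<dots> = v" using pu wa by (simp add: m_def)
        finally have "u \<in> D" using uV True wl by (simp add: D_def)
        then show ?thesis using wmax[of u] True by simp
      next
        case False
        then have "lev w = lev u + 1" using adj_lev a by blast
        then have "par w = u" using par_unique[OF a] by blast
        then show ?thesis by simp
      qed
      then show ?thesis using wpar(1) by blast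
    qed
    have wleaf: "leaf V E w" using nbrs_leaf[OF wV nbw] .
    have pwx: "par w \<noteq> x"
    proof
      assume "par w = x"
      then have "{u. adj E w u} = {x}" using nbw by simp
      then have "b = w" using comp_only_x[OF C wC bC] by blast
      then have "adj E w y" using \<open>adj E b y\<close> by simp
      then have "y \<in> {u. adj E w u}" by simp
      then have "y = x" unfolding nbw using \<open>par w = x\<close> by simp
      then show False using yV by simp
    qed
    have pwC: "par w \<in> C" using comp_closed[OF C wC wpar(1) pwx] .
    have "adj E (par w) w" using wpar(1) adj_sym by metis
    moreover have "par w \<in> V" using pwC CV by auto
    ultimately have "broom_vertex V E (par w)" using wleaf unfolding broom_vertex_def by blast
    then have pwb: "par w = b" using broom_uniq pwC by blast
    show ?thesis
    proof (cases "m = 0")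
      case True
      then have "w = v" using wa by (simp add: m_def)
      then show ?thesis using wleaf pwb by simp
    next
      case False
      then obtain m' where m': "m = Suc m'" by (cases m) auto
      have "v = anc m' b" using wa pwb anc_Suc'[of m' w] m' by (simp add: m_def)
      moreover have "lev w = p" using wpar pwb yb by simp
      moreover have "m' < p - 1" using m' lvpos \<open>lev w = p\<close> by (simp add: m_def)
      ultimately show ?thesis by blast
    qed
  qed
  have ancC: "anc k b \<in> C" if "k < p - 1" for k
    using that
  proof (induction k)
    case 0
    then show ?case using bC by simp
  next
    case (Suc k)
    have "Suc k \<le> lev b" using Suc.prems yb by simp
    then have ad: "adj E (anc k b) (anc (Suc k) b)" using anc_adj bV by blast
    have "lev (anc (Suc k) b) + Suc k = lev b" using anc_props bV \<open>Suc k \<le> lev b\<close> by blast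
    then have "anc (Suc k) b \<noteq> x" using Suc.prems yb by auto
    then show ?case using comp_closed[OF C _ ad] Suc by simp
  qed
  have anclev: "lev (anc k b) + k + 1 = p" if "k < p - 1" for k
    using anc_props[OF bV, of k] that yb by simp
  have ancnl: "\<not> leaf V E (anc k b)" if k: "k < p - 1" for k
  proof -
    have kl: "Suc k \<le> lev b" using k yb by simp
    have a1: "adj E (anc k b) (anc (Suc k) b)" using anc_adj[OF bV kl] .
    have l1: "lev (anc (Suc k) b) + Suc k = lev b" using anc_props[OF bV kl] by blast
    have l0: "lev (anc k b) + k = lev b" using anc_props[OF bV] kl by simp
    obtain c where c: "adj E (anc k b) c" "lev c = lev (anc k b) + 1"
    proof (cases k)
      case 0
      have "adj E b y" using yb(1) adj_sym[of E b y] by simp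
      then show ?thesis using that[of y] yb(2) 0 p_def by simp
    next
      case (Suc k')
      have "Suc k' \<le> lev b" using kl Suc by simp
      then have "adj E (anc k' b) (anc k b)" using anc_adj[OF bV] Suc by simp
      moreover have "lev (anc k' b) + k' = lev b" using anc_props[OF bV] kl Suc by simp
      ultimately show ?thesis using that[of "anc k' b"] adj_sym[of E "anc k' b" "anc k b"] l0 Suc by simp
    qed
    have "c \<noteq> anc (Suc k) b" using c l1 l0 by auto
    then show ?thesis using not_leaf2[OF a1 c(1)] by simp
  qed
  have leafC: "par z = b \<and> lev z = p \<and> adj E z b" if "z \<in> C" "leaf V E z" for z
  proof -
    have "par z = b" using main[OF that(1)] ancnl that(2) by blast
    moreover have "z \<in> V" "z \<noteq> x" using that CV by auto
    ultimately show ?thesis using par[of z] yb by auto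
  qed
  show "par y \<in> C" "lev y \<ge> 2" "lev (par y) + 1 = lev y" "adj E y (par y)"
    using bC p2 yb by (auto simp: b_def p_def)
  show "C = (\<lambda>k. anc k (par y)) ` {..<lev y - 1} \<union> {z\<in>C. leaf V E z}"
  proof
    show "C \<subseteq> (\<lambda>k. anc k (par y)) ` {..<lev y - 1} \<union> {z\<in>C. leaf V E z}"
      using main by (auto simp: b_def p_def)
    show "(\<lambda>k. anc k (par y)) ` {..<lev y - 1} \<union> {z\<in>C. leaf V E z} \<subseteq> C"
      using ancC by (auto simp: b_def p_def)
  qed
  show "(\<lambda>k. anc k (par y)) ` {..<lev y - 1} \<inter> {z\<in>C. leaf V E z} = {}"
    using ancnl by (auto simp: b_def p_def)
  show "inj_on (\<lambda>k. anc k (par y)) {..<lev y - 1}"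
  proof
    fix i j assume "i \<in> {..<lev y - 1}" "j \<in> {..<lev y - 1}" "anc i (par y) = anc j (par y)"
    then show "i = j" using anclev[of i] anclev[of j] by (auto simp: b_def p_def)
  qed
  show "\<And>z. z \<in> C \<Longrightarrow> leaf V E z \<Longrightarrow> par z = par y \<and> lev z = lev y \<and> adj E z (par y)"
    using leafC by (simp add: b_def p_def)
  show "\<And>k. k < lev y - 1 \<Longrightarrow> lev (anc k (par y)) + k + 1 = lev y"
    using anclev by (simp add: b_def p_def)
qed

end


locale setting = rtree +
  fixes T1 T2 :: "'a set" and y1 y2 :: 'a
  assumes C1: "comp_minus V E x T1" and C2: "comp_minus V E x T2" and T12: "T1 \<noteq> T2"
    and one1: "card {b\<in>T1. broom_vertex V E b} = 1" and one2: "card {b\<in>T2. broom_vertex V E b} = 1"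
    and y1: "y1 \<in> T1" "leaf V E y1" and y2: "y2 \<in> T2" "leaf V E y2"
    and xnl: "\<not> leaf V E x" and levy: "lev y1 = lev y2"
begin

definition "b1 = par y1"
definition "b2 = par y2"
definition "p = lev y1"
definition "E' = move_edges E T2 b1"

lemmas S1 = comp_struct[OF C1 one1 y1 xnl, folded b1_def p_def]
lemmas S2 = comp_struct[OF C2 one2 y2 xnl, folded b2_def levy, folded p_def]

lemma T1V: "T1 \<subseteq> V - {x}" and T2V: "T2 \<subseteq> V - {x}" using comp_sub C1 C2 by auto

lemma disj: "T1 \<inter> T2 = {}" using comp_disjoint[OF C1 C2 T12] .

lemma b1T1: "b1 \<in> T1" and b1T2: "b1 \<notin> T2" and b1V: "b1 \<in> V"
  using S1(1) disj T1V by auto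

lemma adjE': "adj E' u v \<longleftrightarrow> (adj E u v \<and> u \<notin> T2 \<and> v \<notin> T2) \<or> (u = b1 \<and> v \<in> T2) \<or> (v = b1 \<and> u \<in> T2)"
proof -
  have f1: "{u, v} \<in> {{b1, z} |z. z \<in> T2} \<longleftrightarrow> (u = b1 \<and> v \<in> T2) \<or> (v = b1 \<and> u \<in> T2)"
    using b1T2 by (auto simp: doubleton_eq_iff)
  have f2: "{u, v} \<in> {e\<in>E. e \<inter> T2 = {}} \<longleftrightarrow> adj E u v \<and> u \<notin> T2 \<and> v \<notin> T2"
    by (auto simp: adj_def)
  have "adj E' u v \<longleftrightarrow> {u, v} \<in> {e\<in>E. e \<inter> T2 = {}} \<or> {u, v} \<in> {{b1, z} |z. z \<in> T2}"
    unfolding E'_def move_edges_def adj_def[of "_ \<union> _"] by (rule Un_iff)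
  then show ?thesis unfolding f1 f2 .
qed

lemma bdE: "\<forall>u v. adj E u v \<longrightarrow> u \<in> T2 \<longrightarrow> v \<notin> T2 \<longrightarrow> v = x"
  using comp_boundary[OF C2] by blast

lemma bdE': "\<forall>u v. adj E' u v \<longrightarrow> u \<in> T2 \<longrightarrow> v \<notin> T2 \<longrightarrow> v = b1"
  unfolding adjE' using b1T2 by blast

lemma geo: assumes "reach G u v" shows "\<exists>g. walk G g \<and> hd g = u \<and> last g = v \<and> length g = Suc (gdist G u v) \<and> distinct g"
proof -
  obtain g where "walk G g" "hd g = u" "last g = v" "length g = Suc (gdist G u v)"
    using gdist_ex[OF assms] by blast
  then show ?thesis using geodesic_distinct[of G g] by auto
qed

lemma FA: assumes a: "a \<in> V - T2" and a': "a' \<in> V - T2"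
  shows "gdist E' a a' = gdist E a a' \<and> reach E' a a'"
proof -
  obtain g where g: "walk E g" "hd g = a" "last g = a'" "length g = Suc (gdist E a a')" "distinct g"
    using geo[OF reachV] a a' by blast
  have "set g \<inter> T2 = {}" using avoid_lemma[OF g(1) g(5) _ _ bdE] g a a' by auto
  then have wg: "walk E' g"
  proof (intro walk_transfer[OF g(1)])
    fix u v assume uv: "adj E u v" "u \<in> set g" "v \<in> set g"
    then have "u \<notin> T2" "v \<notin> T2" using \<open>set g \<inter> T2 = {}\<close> by auto
    then show "adj E' u v" using uv(1) adjE' by simp
  qed
  then have r: "reach E' a a'" unfolding reach_def using g by blast
  have le1: "gdist E' a a' \<le> gdist E a a'" using gdist_le[OF wg g(2,3)] g(4) by simp
  obtain h where h: "walk E' h" "hd h = a" "last h = a'" "length h = Suc (gdist E' a a')" "distinct h"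
    using geo[OF r] by blast
  have "set h \<inter> T2 = {}" using avoid_lemma[OF h(1) h(5) _ _ bdE'] h a a' by auto
  then have wh: "walk E h"
  proof (intro walk_transfer[OF h(1)])
    fix u v assume uv: "adj E' u v" "u \<in> set h" "v \<in> set h"
    then have "u \<notin> T2" "v \<notin> T2" using \<open>set h \<inter> T2 = {}\<close> by auto
    then show "adj E u v" using uv(1) adjE' by simp
  qed
  have le2: "gdist E a a' \<le> gdist E' a a'" using gdist_le[OF wh h(2,3)] h(4) by simp
  show ?thesis using le1 le2 r by simp
qed

lemma FAT: assumes a: "a \<in> V - T2" and z: "z \<in> T2"
  shows "gdist E' a z = gdist E a b1 + 1"
proof -
  have bA: "b1 \<in> V - T2" using b1V b1T2 by simp
  have ab: "adj E' b1 z" using adjE' z by simp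
  have r: "reach E' a z" using reach_trans[OF conjunct2[OF FA[OF a bA]] reach_adj[OF ab]] .
  have "gdist E' a z = gdist E' a b1 + gdist E' b1 z"
    using cut_lemma[OF r _ z bdE'] a by simp
  moreover have "gdist E' b1 z = 1"
  proof -
    have "gdist E' b1 z \<le> 1" using gdist_adj[OF ab] .
    moreover have "gdist E' b1 z \<noteq> 0" using gdist_0[OF reach_adj[OF ab]] b1T2 z by auto
    ultimately show ?thesis by simp
  qed
  ultimately show ?thesis using FA[OF a bA] by simp
qed

lemma FTT: assumes z: "z \<in> T2" and z': "z' \<in> T2"
  shows "gdist E' z z' = (if z = z' then 0 else 2)"
proof (cases "z = z'")
  case False
  have a1: "adj E' z b1" "adj E' b1 z'" using adjE' z z' by auto
  have w: "walk E' [z, b1, z']" using a1 by simp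
  then have le: "gdist E' z z' \<le> 2" using gdist_le[OF w, of z z'] by simp
  have r: "reach E' z z'" unfolding reach_def by (rule exI[of _ "[z, b1, z']"]) (use w in simp)
  have "gdist E' z z' \<noteq> 0" using gdist_0[OF r] False by auto
  moreover have "\<not> adj E' z z'" using adjE' z z' b1T2 by auto
  then have "gdist E' z z' \<noteq> 1" using gdist_1[OF r] by auto
  ultimately show ?thesis using le False by simp
qed simp

lemma Fcut: assumes a: "a \<in> V - T2" and z: "z \<in> T2"
  shows "gdist E a z = gdist E a x + lev z"
  using cut_lemma[OF reachV _ z bdE, of a] a z T2V unfolding lev_def by auto

lemma FR: assumes a: "a \<in> V - T1"
  shows "gdist E a b1 = gdist E a x + lev b1"
proof -
  have bd: "\<forall>u v. adj E u v \<longrightarrow> u \<in> T1 \<longrightarrow> v \<notin> T1 \<longrightarrow> v = x"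
    using comp_boundary[OF C1] by blast
  show ?thesis using cut_lemma[OF reachV _ b1T1 bd, of a] a b1V unfolding lev_def by auto
qed

end


context setting begin

definition "P1 = (\<lambda>k. anc k b1) ` {..<p - 1}"
definition "L1 = {z\<in>T1. leaf V E z}"
definition "P2 = (\<lambda>k. anc k b2) ` {..<p - 1}"
definition "L2 = {z\<in>T2. leaf V E z}"

lemma p2: "p \<ge> 2" using S1(2) .

lemma b2V: "b2 \<in> V" using S2(1) T2V by auto

lemma levb1: "lev b1 + 1 = p" using S1(3) .
lemma levb2: "lev b2 + 1 = p" using S2(3) .

lemma T1eq: "T1 = P1 \<union> L1" and T1dis: "P1 \<inter> L1 = {}" and inj1: "inj_on (\<lambda>k. anc k b1) {..<p - 1}"
  using S1(5,6,7) unfolding P1_def L1_def by auto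
lemma T2eq: "T2 = P2 \<union> L2" and T2dis: "P2 \<inter> L2 = {}" and inj2: "inj_on (\<lambda>k. anc k b2) {..<p - 1}"
  using S2(5,6,7) unfolding P2_def L2_def by auto

lemma finT1: "finite T1" using finite_subset[OF T1V] finV by simp
lemma finT2: "finite T2" using finite_subset[OF T2V] finV by simp
lemma finL1: "finite L1" using finT1 unfolding L1_def by simp
lemma finL2: "finite L2" using finT2 unfolding L2_def by simp
lemma finP1: "finite P1" unfolding P1_def by simp
lemma finP2: "finite P2" unfolding P2_def by simp

lemma cardP1: "card P1 = p - 1" and cardP2: "card P2 = p - 1"
  using card_image[OF inj1] card_image[OF inj2] unfolding P1_def P2_def by auto

lemma cardT1: "card T1 = p - 1 + card L1"
proof -
  have "card T1 = card (P1 \<union> L1)" using T1eq by (rule arg_cong)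
  then show ?thesis using card_Un_disjoint[OF finP1 finL1 T1dis] cardP1 by simp
qed

lemma cardT2: "card T2 = p - 1 + card L2"
proof -
  have "card T2 = card (P2 \<union> L2)" using T2eq by (rule arg_cong)
  then show ?thesis using card_Un_disjoint[OF finP2 finL2 T2dis] cardP2 by simp
qed

lemma L1props: "z \<in> L1 \<Longrightarrow> lev z = p \<and> adj E z b1" using S1(8) unfolding L1_def by auto
lemma L2props: "z \<in> L2 \<Longrightarrow> lev z = p \<and> adj E z b2 \<and> par z = b2" using S2(8) unfolding L2_def by auto

lemma anc1: "k < p - 1 \<Longrightarrow> lev (anc k b1) + k + 1 = p" using S1(9) .
lemma anc2: "k < p - 1 \<Longrightarrow> lev (anc k b2) + k + 1 = p" using S2(9) .

lemma dx: "gdist E v x = lev v" unfolding lev_def by (rule gdist_sym)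

lemma d_anc_b1: "k < p - 1 \<Longrightarrow> gdist E (anc k b1) b1 = k"
proof -
  assume "k < p - 1"
  then have "k \<le> lev b1" using levb1 by simp
  then have "gdist E b1 (anc k b1) = k" using anc_dist[OF b1V] by blast
  then show ?thesis using gdist_sym[of E b1 "anc k b1"] by simp
qed

lemma d_anc2: assumes "i < p - 1" "j < p - 1"
  shows "gdist E (anc i b2) (anc j b2) = nat \<bar>int i - int j\<bar>"
proof -
  have gen: "gdist E (anc i b2) (anc j b2) = j - i" if "i \<le> j" "j < p - 1" for i j
  proof -
    have iV: "anc i b2 \<in> V" "lev (anc i b2) + i = lev b2" using anc_props[OF b2V, of i] that levb2 by auto
    have "anc j b2 = anc (j - i) (anc i b2)" using anc_add[of "j - i" i b2] that by simp
    moreover have "j - i \<le> lev (anc i b2)" using iV(2) that levb2 by simp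
    ultimately show ?thesis using anc_dist[OF iV(1)] by simp
  qed
  show ?thesis
  proof (cases "i \<le> j")
    case True
    then show ?thesis using gen[OF True assms(2)] by simp
  next
    case False
    then have "gdist E (anc j b2) (anc i b2) = i - j" using gen[of j i] assms by simp
    then show ?thesis using False gdist_sym[of E "anc i b2" "anc j b2"] by simp
  qed
qed

lemma d_leaf_anc2: assumes "z \<in> L2" "i < p - 1"
  shows "gdist E z (anc i b2) = i + 1"
proof -
  have z: "lev z = p" "par z = b2" "z \<in> V" using L2props[OF assms(1)] adj_V by auto
  have "anc (Suc i) z = anc i b2" using anc_Suc'[of i z] z by simp
  moreover have "Suc i \<le> lev z" using z assms by simp
  ultimately show ?thesis using anc_dist[OF z(3), of "Suc i"] by simp
qed

lemma d_leaves2: assumes "z \<in> L2" "z' \<in> L2"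
  shows "gdist E z z' = (if z = z' then 0 else 2)"
proof (cases "z = z'")
  case False
  have "adj E z b2" using L2props assms(1) by blast
  moreover have "adj E z' b2" using L2props assms(2) by blast
  ultimately
  have a: "adj E z b2" "adj E b2 z'" using adj_sym[of E z' b2] by simp_all
  have w: "walk E [z, b2, z']" using a by simp
  then have le: "gdist E z z' \<le> 2" using gdist_le[OF w, of z z'] by simp
  have r: "reach E z z'" unfolding reach_def by (rule exI[of _ "[z, b2, z']"]) (use w in simp)
  have "gdist E z z' \<noteq> 0" using gdist_0[OF r] False by auto
  moreover have "\<not> adj E z z'" using adj_lev L2props assms by fastforce
  then have "gdist E z z' \<noteq> 1" using gdist_1[OF r] by auto
  ultimately show ?thesis using le False by simp
qed simp

end


context setting begin

lemma sum_P1: "(\<Sum>a\<in>P1. f a) = (\<Sum>k<p - 1. f (anc k b1))"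
  unfolding P1_def using sum.reindex[OF inj1] by simp
lemma sum_P2: "(\<Sum>a\<in>P2. f a) = (\<Sum>k<p - 1. f (anc k b2))"
  unfolding P2_def using sum.reindex[OF inj2] by simp

lemma sum_T1_split: "(\<Sum>a\<in>T1. f a) = (\<Sum>a\<in>P1. f a) + (\<Sum>a\<in>L1. f a)"
proof -
  have "(\<Sum>a\<in>T1. f a) = (\<Sum>a\<in>P1 \<union> L1. f a)" using T1eq by (rule arg_cong)
  then show ?thesis using sum.union_disjoint[OF finP1 finL1 T1dis] by simp
qed
lemma sum_T2_split: "(\<Sum>a\<in>T2. f a) = (\<Sum>a\<in>P2. f a) + (\<Sum>a\<in>L2. f a)"
proof -
  have "(\<Sum>a\<in>T2. f a) = (\<Sum>a\<in>P2 \<union> L2. f a)" using T2eq by (rule arg_cong)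
  then show ?thesis using sum.union_disjoint[OF finP2 finL2 T2dis] by simp
qed

lemma sumT1: "(\<Sum>a\<in>T1. int (gdist E a x) - int (gdist E a b1)) = (int p - 1) * (1 + int (card L1))"
proof -
  have pk: "(\<Sum>k<p - 1. int (gdist E (anc k b1) x) - int (gdist E (anc k b1) b1)) =
            (\<Sum>k<p - 1. (int p - 1) - 2 * int k)"
  proof (rule sum.cong[OF refl])
    fix k assume "k \<in> {..<p - 1}"
    then have k: "k < p - 1" by simp
    show "int (gdist E (anc k b1) x) - int (gdist E (anc k b1) b1) = (int p - 1) - 2 * int k"
      using anc1[OF k] d_anc_b1[OF k] dx[of "anc k b1"] by simp
  qed
  have "(\<Sum>k<p - 1. (int p - 1) - 2 * int k) = int (p - 1) * (int p - 1) - 2 * (\<Sum>k<p - 1. int k)"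
    by (simp add: sum_subtractf sum_distrib_left)
  also have "\<dots> = int p - 1" using sum_nat_int2[of "p - 1"] p2 by (simp add: of_nat_diff algebra_simps)
  finally have sP: "(\<Sum>a\<in>P1. int (gdist E a x) - int (gdist E a b1)) = int p - 1"
    unfolding sum_P1 using pk by simp
  have "(\<Sum>a\<in>L1. int (gdist E a x) - int (gdist E a b1)) = (\<Sum>a\<in>L1. int p - 1)"
  proof (rule sum.cong[OF refl])
    fix a assume a: "a \<in> L1"
    have l: "lev a = p" "adj E a b1" using L1props[OF a] by auto
    have "gdist E a b1 \<le> 1" using gdist_adj[OF l(2)] .
    moreover have "gdist E a b1 \<noteq> 0" using gdist_0[OF reach_adj[OF l(2)]] adj_V[OF l(2)] by auto
    ultimately have "gdist E a b1 = 1" by simp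
    then show "int (gdist E a x) - int (gdist E a b1) = int p - 1" using dx[of a] l by simp
  qed
  then have sL: "(\<Sum>a\<in>L1. int (gdist E a x) - int (gdist E a b1)) = int (card L1) * (int p - 1)"
    by simp
  show ?thesis using sum_T1_split[of "\<lambda>a. int (gdist E a x) - int (gdist E a b1)"] sP sL
    by (simp add: algebra_simps)
qed

lemma sumT2lev: "(\<Sum>z\<in>T2. int (lev z) - 1) = (\<Sum>k<p - 1. int p - 2 - int k) + int (card L2) * (int p - 1)"
proof -
  have "(\<Sum>k<p - 1. int (lev (anc k b2)) - 1) = (\<Sum>k<p - 1. int p - 2 - int k)"
  proof (rule sum.cong[OF refl])
    fix k assume "k \<in> {..<p - 1}"
    then show "int (lev (anc k b2)) - 1 = int p - 2 - int k" using anc2[of k] by simp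
  qed
  moreover have "(\<Sum>z\<in>L2. int (lev z) - 1) = (\<Sum>z\<in>L2. int p - 1)"
    by (rule sum.cong[OF refl]) (use L2props in simp)
  moreover have "(\<Sum>z\<in>P2. int (lev z) - 1) = (\<Sum>k<p - 1. int (lev (anc k b2)) - 1)"
    unfolding sum_P2 ..
  ultimately show ?thesis using sum_T2_split[of "\<lambda>z. int (lev z) - 1"] by simp
qed

lemma sumT2T2: "(\<Sum>z\<in>T2. \<Sum>z'\<in>T2. int (gdist E z z')) =
   (\<Sum>i<p - 1. \<Sum>j<p - 1. \<bar>int i - int j\<bar>) + 2 * int (card L2) * (\<Sum>i<p - 1. int i + 1)
   + 2 * int (card L2) * (int (card L2) - 1)"
proof -
  let ?f = "\<lambda>z z'. int (gdist E z z')"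
  have split: "(\<Sum>z\<in>T2. \<Sum>z'\<in>T2. ?f z z') = (\<Sum>z\<in>P2 \<union> L2. \<Sum>z'\<in>P2 \<union> L2. ?f z z')"
    using T2eq by (rule arg_cong)
  have PP: "(\<Sum>z\<in>P2. \<Sum>z'\<in>P2. ?f z z') = (\<Sum>i<p - 1. \<Sum>j<p - 1. \<bar>int i - int j\<bar>)"
  proof -
    have "(\<Sum>z\<in>P2. \<Sum>z'\<in>P2. ?f z z') = (\<Sum>i<p - 1. \<Sum>j<p - 1. ?f (anc i b2) (anc j b2))"
      unfolding sum_P2 ..
    also have "\<dots> = (\<Sum>i<p - 1. \<Sum>j<p - 1. \<bar>int i - int j\<bar>)"
      by (intro sum.cong refl) (simp add: d_anc2)
    finally show ?thesis .
  qed
  have PL: "(\<Sum>z\<in>P2. \<Sum>z'\<in>L2. ?f z z') = int (card L2) * (\<Sum>i<p - 1. int i + 1)"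
  proof -
    have "(\<Sum>z\<in>P2. \<Sum>z'\<in>L2. ?f z z') = (\<Sum>i<p - 1. \<Sum>z'\<in>L2. ?f (anc i b2) z')"
      unfolding sum_P2 ..
    also have "\<dots> = (\<Sum>i<p - 1. \<Sum>z'\<in>L2. int i + 1)"
      by (intro sum.cong refl) (simp add: gdist_sym[of E "anc _ b2"] d_leaf_anc2)
    also have "\<dots> = int (card L2) * (\<Sum>i<p - 1. int i + 1)"
      by (simp add: sum_distrib_left mult.commute)
    finally show ?thesis .
  qed
  have LP: "(\<Sum>z\<in>L2. \<Sum>z'\<in>P2. ?f z z') = (\<Sum>z\<in>P2. \<Sum>z'\<in>L2. ?f z z')"
    by (subst sum.swap) (simp add: gdist_sym[of E _ "_"])
  have LL: "(\<Sum>z\<in>L2. \<Sum>z'\<in>L2. ?f z z') = 2 * int (card L2) * (int (card L2) - 1)"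
  proof -
    have "(\<Sum>z\<in>L2. \<Sum>z'\<in>L2. ?f z z') = (\<Sum>z\<in>L2. \<Sum>z'\<in>L2. (if z = z' then 0 else 2))"
      by (intro sum.cong refl) (simp add: d_leaves2)
    then show ?thesis using sum_offdiag[OF finL2, of 2] by simp
  qed
  show ?thesis unfolding split sum_split4[OF finP2 finL2 T2dis] PP LP PL LL by simp
qed

end


context setting begin

lemma main_identity:
  "3 * (int (\<Sum>u\<in>V. \<Sum>v\<in>V. gdist E u v) - int (\<Sum>u\<in>V. \<Sum>v\<in>V. gdist E' u v)) =
   (int p - 1) * (12 * (int p + int (card L2) - 1) * (int (card L1) - 1)
      - int p * (3 * int (card V) + 5 - 12 * int (card L2) - 10 * int p))"
proof -
  define A where "A = V - T2"
  define R where "R = V - T2 - T1"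
  define D where "D u v = int (gdist E u v) - int (gdist E' u v)" for u v
  have finA: "finite A" using finV by (simp add: A_def)
  have finR: "finite R" using finV by (simp add: R_def)
  have AT: "A \<inter> T2 = {}" by (auto simp: A_def)
  have VA: "A \<union> T2 = V" using T2V by (auto simp: A_def)
  have AR: "A = R \<union> T1" using T1V disj by (auto simp: A_def R_def)
  have RT1: "R \<inter> T1 = {}" by (auto simp: R_def)
  have cA: "int (card A) = int (card V) - int (card T2)"
  proof -
    have sub: "T2 \<subseteq> V" using T2V by auto
    have "card A = card V - card T2" unfolding A_def by (rule card_Diff_subset[OF finT2 sub])
    moreover have "card T2 \<le> card V" using card_mono[OF finV sub] .
    ultimately show ?thesis by (simp add: of_nat_diff)
  qed
  have cR: "int (card R) = int (card A) - int (card T1)"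
  proof -
    have "card A = card R + card T1" using card_Un_disjoint[OF finR finT1 RT1] AR by simp
    then show ?thesis by simp
  qed
  have tot: "int (\<Sum>u\<in>V. \<Sum>v\<in>V. gdist E u v) - int (\<Sum>u\<in>V. \<Sum>v\<in>V. gdist E' u v) =
         (\<Sum>u\<in>V. \<Sum>v\<in>V. D u v)"
    by (simp add: D_def of_nat_sum sum_subtractf)
  also have "\<dots> = (\<Sum>u\<in>A \<union> T2. \<Sum>v\<in>A \<union> T2. D u v)" using VA by simp
  also have "\<dots> = (\<Sum>u\<in>A. \<Sum>v\<in>A. D u v) + (\<Sum>u\<in>A. \<Sum>v\<in>T2. D u v) + (\<Sum>u\<in>T2. \<Sum>v\<in>A. D u v)
      + (\<Sum>u\<in>T2. \<Sum>v\<in>T2. D u v)"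
    by (rule sum_split4[OF finA finT2 AT])
  finally have tot: "int (\<Sum>u\<in>V. \<Sum>v\<in>V. gdist E u v) - int (\<Sum>u\<in>V. \<Sum>v\<in>V. gdist E' u v) =
      (\<Sum>u\<in>A. \<Sum>v\<in>A. D u v) + (\<Sum>u\<in>A. \<Sum>v\<in>T2. D u v) + (\<Sum>u\<in>T2. \<Sum>v\<in>A. D u v)
      + (\<Sum>u\<in>T2. \<Sum>v\<in>T2. D u v)" .
  have AA: "(\<Sum>u\<in>A. \<Sum>v\<in>A. D u v) = 0"
    by (intro sum.neutral ballI) (use FA in \<open>simp add: D_def A_def\<close>)
  have TA: "(\<Sum>u\<in>T2. \<Sum>v\<in>A. D u v) = (\<Sum>u\<in>A. \<Sum>v\<in>T2. D u v)"
    by (subst sum.swap) (simp add: D_def gdist_sym[of E _ "_"] gdist_sym[of E' _ "_"])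
  define F where "F a = int (gdist E a x) - int (gdist E a b1)" for a
  define G where "G z = int (lev z) - 1" for z
  have ATs: "(\<Sum>u\<in>A. \<Sum>v\<in>T2. D u v) = (\<Sum>u\<in>A. \<Sum>v\<in>T2. F u + G v)"
  proof (intro sum.cong refl)
    fix u v assume u: "u \<in> A" and v: "v \<in> T2"
    have uA: "u \<in> V - T2" using u by (simp add: A_def)
    show "D u v = F u + G v"
      using Fcut[OF uA v] FAT[OF uA v] by (simp add: D_def F_def G_def)
  qed
  also have "\<dots> = int (card T2) * (\<Sum>u\<in>A. F u) + int (card A) * (\<Sum>v\<in>T2. G v)"
    by (simp add: sum.distrib sum_distrib_left sum_distrib_right mult.commute)
  finally have ATs: "(\<Sum>u\<in>A. \<Sum>v\<in>T2. D u v) = int (card T2) * (\<Sum>u\<in>A. F u) + int (card A) * (\<Sum>v\<in>T2. G v)" .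
  have sF: "(\<Sum>u\<in>A. F u) = - int (card R) * (int p - 1) + (int p - 1) * (1 + int (card L1))"
  proof -
    have "(\<Sum>u\<in>A. F u) = (\<Sum>u\<in>R. F u) + (\<Sum>u\<in>T1. F u)"
      unfolding AR by (rule sum.union_disjoint[OF finR finT1 RT1])
    moreover have "(\<Sum>u\<in>R. F u) = (\<Sum>u\<in>R. - (int p - 1))"
    proof (intro sum.cong refl)
      fix u assume "u \<in> R"
      then have "u \<in> V - T1" by (simp add: R_def)
      then show "F u = - (int p - 1)" using FR levb1 by (simp add: F_def)
    qed
    moreover have "(\<Sum>u\<in>T1. F u) = (int p - 1) * (1 + int (card L1))" using sumT1 by (simp add: F_def)
    ultimately show ?thesis by (simp add: algebra_simps)
  qed
  have sG: "(\<Sum>v\<in>T2. G v) = (\<Sum>k<p - 1. int p - 2 - int k) + int (card L2) * (int p - 1)"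
    using sumT2lev by (simp add: G_def)
  have sK: "(\<Sum>k<p - 1. int p - 2 - int k) = int (p - 1) * (int p - 2) - (\<Sum>k<p - 1. int k)"
    by (simp add: sum_subtractf)
  have TT: "(\<Sum>u\<in>T2. \<Sum>v\<in>T2. D u v) = (\<Sum>u\<in>T2. \<Sum>v\<in>T2. int (gdist E u v))
      - 2 * int (card T2) * (int (card T2) - 1)"
  proof -
    have "(\<Sum>u\<in>T2. \<Sum>v\<in>T2. D u v) = (\<Sum>u\<in>T2. \<Sum>v\<in>T2. int (gdist E u v)) -
        (\<Sum>u\<in>T2. \<Sum>v\<in>T2. (if u = v then 0 else 2))"
    proof -
      have "(\<Sum>u\<in>T2. \<Sum>v\<in>T2. D u v) = (\<Sum>u\<in>T2. \<Sum>v\<in>T2. int (gdist E u v) - (if u = v then 0 else 2))"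
        by (intro sum.cong refl) (simp add: D_def FTT)
      then show ?thesis by (simp add: sum_subtractf)
    qed
    then show ?thesis using sum_offdiag[OF finT2, of 2] by simp
  qed
  define m where "m = int p - 1"
  define K where "K = (\<Sum>k<p - 1. int k)"
  define Q where "Q = (\<Sum>i<p - 1. \<Sum>j<p - 1. \<bar>int i - int j\<bar>)"
  have mp: "int (p - 1) = m" using p2 by (simp add: m_def of_nat_diff)
  have eK: "2 * K = m * (m - 1)" using sum_nat_int2[of "p - 1"] mp by (simp add: K_def)
  have eQ: "3 * Q = (m - 1) * m * (m + 1)" using sum_absdiff[of "p - 1"] mp by (simp add: Q_def)
  have sK2: "(\<Sum>i<p - 1. int i + 1) = K + m" using mp by (simp add: sum.distrib K_def)
  have cT2: "int (card T2) = m + int (card L2)" using cardT2 mp by simp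
  have cT1: "int (card T1) = m + int (card L1)" using cardT1 mp by simp
  have pm: "int p = m + 1" by (simp add: m_def)
  have sG': "(\<Sum>v\<in>T2. G v) = m * (m - 1) - K + int (card L2) * m"
    using sG sK mp pm by (simp add: K_def algebra_simps)
  show ?thesis
    unfolding tot AA TA ATs sF sG' TT sumT2T2 sK2 cR cA cT2 cT1 pm mp
    unfolding K_def[symmetric] Q_def[symmetric]
    using eK eQ by algebra
qed

end


theorem mainTheorem5:
  fixes V :: "'a set" and E :: "'a set set" and x y1 y2 y1' :: 'a and T1 T2 :: "'a set"
    and n d p t1 t2 :: nat
  assumes "max_wiener_tree V E"
    and "card V = n" and "diameter V E = d"
    and "special_vertex V E x"
    and "special_witness V E x T1 T2"
    and "y1 \<in> T1" and "leaf V E y1" and "y2 \<in> T2" and "leaf V E y2"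
    and "broom_vertex V E y1'" and "adj E y1' y1"
    and "p = gdist E x y1" and "p = gdist E x y2"
    and "t1 = card {y\<in>T1. leaf V E y}" and "t2 = card {y\<in>T2. leaf V E y}"
  shows "wiener V (move_edges E T2 y1') \<le> wiener V E \<longleftrightarrow>
         real t1 - 1 \<ge> real p * (3 * real n + 5 - 12 * real t2 - 10 * real p)
                          / (12 * (real p + real t2 - 1))"
proof -
  have tr: "tree V E" using assms(1) unfolding max_wiener_tree_def by blast
  have xV: "x \<in> V" and degx: "degree E x \<ge> 3" using assms(4) unfolding special_vertex_def by auto
  have xnl: "\<not> leaf V E x" using degx unfolding leaf_def by simp
  interpret rtree V E x using tr xV by unfold_locales
  have sw: "comp_minus V E x T1" "comp_minus V E x T2" "T1 \<noteq> T2"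
    "card {b\<in>T1. broom_vertex V E b} = 1" "card {b\<in>T2. broom_vertex V E b} = 1"
    using assms(5) unfolding special_witness_def by auto
  have levy: "lev y1 = lev y2" using assms(12,13) unfolding lev_def by simp
  interpret S: setting V E x T1 T2 y1 y2
    by unfold_locales (use sw assms(6-9) xnl levy in auto)
  have y1'b1: "y1' = S.b1"
  proof -
    have "adj E y1 y1'" using assms(11) adj_sym by metis
    then have "{w. adj E y1 w} = {y1'}" using leaf_nbrs assms(7) by blast
    moreover have "adj E y1 S.b1" using S.S1(4) .
    ultimately show ?thesis by auto
  qed
  have E'eq: "move_edges E T2 y1' = S.E'" unfolding S.E'_def y1'b1 ..
  have pp: "p = S.p" using assms(12) unfolding S.p_def lev_def by simp
  have t1e: "t1 = card S.L1" using assms(14) unfolding S.L1_def by simp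
  have t2e: "t2 = card S.L2" using assms(15) unfolding S.L2_def by simp
  define SV where "SV = (\<Sum>u\<in>V. \<Sum>v\<in>V. gdist E u v)"
  define SV' where "SV' = (\<Sum>u\<in>V. \<Sum>v\<in>V. gdist S.E' u v)"
  have id: "3 * (int SV - int SV') = (int p - 1) * (12 * (int p + int t2 - 1) * (int t1 - 1)
      - int p * (3 * int n + 5 - 12 * int t2 - 10 * int p))"
    using S.main_identity unfolding SV_def SV'_def pp t1e t2e assms(2)[symmetric] .
  have ev: "even SV" "even SV'" unfolding SV_def SV'_def
    by (rule sum_even[OF finV]; simp add: gdist_sym[of _ _ "_"])+
  have w1: "wiener V E = SV div 2" unfolding wiener_def SV_def ..
  have w2: "wiener V (move_edges E T2 y1') = SV' div 2" unfolding wiener_def SV'_def E'eq ..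
  have p2: "p \<ge> 2" using S.p2 pp by simp
  define X where "X = 12 * (int p + int t2 - 1) * (int t1 - 1) - int p * (3 * int n + 5 - 12 * int t2 - 10 * int p)"
  have step1: "wiener V (move_edges E T2 y1') \<le> wiener V E \<longleftrightarrow> SV' \<le> SV"
    unfolding w1 w2 using ev by (auto elim!: evenE)
  have step2: "SV' \<le> SV \<longleftrightarrow> 0 \<le> X"
  proof -
    have pos: "int p - 1 > 0" using p2 by simp
    have "SV' \<le> SV \<longleftrightarrow> 0 \<le> 3 * (int SV - int SV')" by simp
    also have "\<dots> \<longleftrightarrow> 0 \<le> (int p - 1) * X" unfolding id X_def ..
    also have "\<dots> \<longleftrightarrow> 0 \<le> X" using pos by (simp add: zero_le_mult_iff)
    finally show ?thesis .
  qed
  have step3: "0 \<le> X \<longleftrightarrow> real t1 - 1 \<ge> real p * (3 * real n + 5 - 12 * real t2 - 10 * real p)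
                          / (12 * (real p + real t2 - 1))"
  proof -
    have B: "12 * (real p + real t2 - 1) > 0" using p2 by simp
    have "real_of_int X = (real t1 - 1) * (12 * (real p + real t2 - 1)) - real p * (3 * real n + 5 - 12 * real t2 - 10 * real p)"
      unfolding X_def by (simp add: algebra_simps)
    moreover have "0 \<le> X \<longleftrightarrow> 0 \<le> real_of_int X" by simp
    ultimately show ?thesis using B by (simp add: pos_divide_le_eq)
  qed
  show ?thesis using step1 step2 step3 by simp
qed

end
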